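(* Let $\zeta\in(0,1]$ and $c=\zeta/20000$. Let $n'\ge1$, $p_1,\dots,p_{n'}\ge1$, and let $x_j\in[0,1]$ and $x_{\{j\}\cup\{j'\}}$ ($1\le j,j'\le n'$) be reals with $x_{\{j\}\cup\{j'\}}=x_{\{j'\}\cup\{j\}}\ge0$ and $x_{\{j\}\cup\{j\}}=x_j$, such that the matrix indexed by $0,1,\dots,n'$ with $(0,0)$-entry $1$, $(0,j)$- and $(j,0)$-entries $x_j$ and $(j,j')$-entry $x_{\{j\}\cup\{j'\}}$ is positive semidefinite. Say job $j$ has class $k\in\mathbb Z$ if $p_j\in[10^{k-1},10^k)$. Let $\mathcal G$ be a family of pairwise disjoint nonempty subsets of $\{1,\dots,n'\}$, each consisting of jobs of a single class and each with $\sum_{j\in G'}x_j\ge1/10$; let $G=\bigcup\mathcal G$ and $\bar G=\{1,\dots,n'\}\setminus G$, and assume that for every class $k$, $\sum_{j\in\bar G,\ j\text{ of class }k}x_j<1/10$. Let $X_1,\dots,X_{n'}$ be $\{0,1\}$-valued random variables with $\mathbb E[X_j]=x_j$, $\mathbb E[X_jX_{j'}]\le x_jx_{j'}$ for $j\ne j'$, and $\mathbb E[X_jX_{j'}]\le(1-\zeta)x_jx_{j'}$ for distinct $j,j'$ in a common group of $\mathcal G$. Then $$\mathbb E\Big[\sum_{j=1}^{n'}p_jX_j(p_1X_1+\dots+p_jX_j)\Big]\le\Big(\frac32-c\Big)\sum_{j=1}^{n'}p_j\big(p_1x_{\{j\}\cup\{1\}}+\dots+p_jx_{\{j\}\cu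p\{j\}}\big).$$
   Context: In the paper this is the per-machine inequality for a fixed machine and a prefix $\{1,\dots,n'\}$ of jobs in Smith's order, where $X_j$ comes from the rounding of Theorem 2 (with $\zeta=1/108$), the $x$'s from the SDP solution, and $\mathcal G$ from the grouping procedure (groups restricted to those entirely within $\{1,\dots,n'\}$). *)

theory Defs
  imports "HOL-Probability.Probability"
begin

text \<open>The (n'+1)x(n'+1) matrix indexed by 0..n' built from the SDP solution:
  entry (0,0) is 1, entries (0,j),(j,0) are x j, entry (j,j') is y j j'
  (y j j' stands for the variable x_{{j} union {j'}}).\<close>
definition sdp_matrix :: "(nat \<Rightarrow> real) \<Rightarrow> (nat \<Rightarrow> nat \<Rightarrow> real) \<Rightarrow> nat \<Rightarrow> nat \<Rightarrow> real" where
  "sdp_matrix x y i j =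
     (if i = 0 \<and> j = 0 then 1
      else if i = 0 then x j
      else if j = 0 then x i
      else y i j)"

definition psd_on :: "nat \<Rightarrow> (nat \<Rightarrow> nat \<Rightarrow> real) \<Rightarrow> bool" where
  "psd_on n A \<longleftrightarrow>
     (\<forall>i\<in>{0..n}. \<forall>j\<in>{0..n}. A i j = A j i) \<and>
     (\<forall>v :: nat \<Rightarrow> real. (\<Sum>i=0..n. \<Sum>j=0..n. v i * A i j * v j) \<ge> 0)"

definition has_class :: "(nat \<Rightarrow> real) \<Rightarrow> nat \<Rightarrow> int \<Rightarrow> bool" where
  "has_class p j k \<longleftrightarrow> (10::real) powi (k - 1) \<le> p j \<and> p j < (10::real) powi k"

end

theory Submission imports Defs begin


lemma tri_sum:
  fixes f :: "nat \<Rightarrow> nat \<Rightarrow> real"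
  assumes "\<And>i j. i \<in> {1..n} \<Longrightarrow> j \<in> {1..n} \<Longrightarrow> f i j = f j i"
  shows "2 * (\<Sum>j=1..n. \<Sum>i=1..j. f j i) = (\<Sum>i=1..n. \<Sum>j=1..n. f i j) + (\<Sum>i=1..n. f i i)"
  using assms
proof (induction n)
  case 0
  then show ?case by simp
next
  case (Suc n)
  have IH: "2 * (\<Sum>j=1..n. \<Sum>i=1..j. f j i) = (\<Sum>i=1..n. \<Sum>j=1..n. f i j) + (\<Sum>i=1..n. f i i)"
    using Suc by auto
  have s: "(\<Sum>i=1..n. f (Suc n) i) = (\<Sum>i=1..n. f i (Suc n))"
    using Suc.prems by (intro sum.cong) auto
  have "(\<Sum>i=1..Suc n. \<Sum>j=1..Suc n. f i j) = (\<Sum>i=1..n. \<Sum>j=1..n. f i j) + (\<Sum>i=1..n. f i (Suc n))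
     + (\<Sum>j=1..n. f (Suc n) j) + f (Suc n) (Suc n)"
    by (simp add: sum.distrib)
  moreover have "(\<Sum>j=1..Suc n. \<Sum>i=1..j. f j i) = (\<Sum>j=1..n. \<Sum>i=1..j. f j i) + (\<Sum>i=1..n. f (Suc n) i) + f (Suc n) (Suc n)"
    by simp
  moreover have "(\<Sum>i=1..Suc n. f i i) = (\<Sum>i=1..n. f i i) + f (Suc n) (Suc n)" by simp
  ultimately show ?case using IH s by linarith
qed

lemma psd_quad:
  fixes v x :: "nat \<Rightarrow> real" and y :: "nat \<Rightarrow> nat \<Rightarrow> real"
  assumes "psd_on n (sdp_matrix x y)"
  shows "(\<Sum>i=1..n. v i * x i)^2 \<le> (\<Sum>i=1..n. \<Sum>j=1..n. v i * y i j * v j)"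
proof -
  define T where "T = (\<Sum>i=1..n. v i * x i)"
  define w where "w = (\<lambda>i. if i = 0 then - T else v i)"
  have "0 \<le> (\<Sum>i=0..n. \<Sum>j=0..n. w i * sdp_matrix x y i j * w j)"
    using assms unfolding psd_on_def by blast
  also have "\<dots> = (\<Sum>j=0..n. w 0 * sdp_matrix x y 0 j * w j) + (\<Sum>i=1..n. \<Sum>j=0..n. w i * sdp_matrix x y i j * w j)"
    by (simp add: sum.atLeast_Suc_atMost)
  also have "(\<Sum>j=0..n. w 0 * sdp_matrix x y 0 j * w j) = T*T + (\<Sum>j=1..n. - T * x j * v j)"
    by (simp add: sum.atLeast_Suc_atMost w_def sdp_matrix_def)
  also have "(\<Sum>i=1..n. \<Sum>j=0..n. w i * sdp_matrix x y i j * w j) = (\<Sum>i=1..n. - v i * x i * T + (\<Sum>j=1..n. v i * y i j * v j))"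
    by (intro sum.cong refl) (simp add: sum.atLeast_Suc_atMost w_def sdp_matrix_def)
  finally have "0 \<le> T*T + (\<Sum>j=1..n. - T * x j * v j) + (\<Sum>i=1..n. - v i * x i * T + (\<Sum>j=1..n. v i * y i j * v j))" .
  also have "(\<Sum>j=1..n. - T * x j * v j) = - T * T"
    by (simp add: T_def sum_distrib_left sum_negf algebra_simps)
  also have "(\<Sum>i=1..n. - v i * x i * T + (\<Sum>j=1..n. v i * y i j * v j)) = - T * T + (\<Sum>i=1..n. \<Sum>j=1..n. v i * y i j * v j)"
  proof -
    have "(\<Sum>i=1..n. - v i * x i * T + (\<Sum>j=1..n. v i * y i j * v j)) = (\<Sum>i=1..n. - v i * x i * T) + (\<Sum>i=1..n. \<Sum>j=1..n. v i * y i j * v j)"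
      by (rule sum.distrib)
    moreover have "(\<Sum>i=1..n. - v i * x i * T) = - T * T"
      by (simp add: T_def sum_distrib_right sum_negf)
    ultimately show ?thesis by simp
  qed
  finally show ?thesis by (simp add: T_def power2_eq_square)
qed



definition cl :: "(nat \<Rightarrow> real) \<Rightarrow> nat \<Rightarrow> nat" where
  "cl p j = (LEAST k::nat. p j < 10^k)"

lemma cl_ex: "\<exists>k::nat. (r::real) < 10^k"
  using real_arch_pow[of 10 r] by auto

lemma cl_lt: "p j < 10^(cl p j)"
  unfolding cl_def using cl_ex[of "p j"] by (rule LeastI_ex)

lemma cl_ge1: assumes "p j \<ge> 1" shows "cl p j \<ge> 1"
proof (rule ccontr)
  assume "\<not> 1 \<le> cl p j"
  then have "cl p j = 0" by simp
  with cl_lt[of p j] assms show False by simp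
qed

lemma cl_low: assumes "p j \<ge> 1" shows "10^(cl p j - 1) \<le> p j"
proof (rule ccontr)
  assume "\<not> 10^(cl p j - 1) \<le> p j"
  then have "p j < 10^(cl p j - 1)" by simp
  then have "cl p j \<le> cl p j - 1" unfolding cl_def by (rule Least_le)
  with cl_ge1[of p j, OF assms] show False by simp
qed

lemma cl_mono: assumes "p j \<le> p i" shows "cl p j \<le> cl p i"
proof -
  have "p j < 10^(cl p i)" using assms cl_lt[of p i] by simp
  then show ?thesis unfolding cl_def[of p j] by (rule Least_le)
qed

lemma cl_has: assumes "p j \<ge> 1" shows "has_class p j (int (cl p j))"
proof -
  have "int (cl p j) - 1 = int (cl p j - 1)" using cl_ge1[of p j, OF assms] by simp
  then show ?thesis unfolding has_class_def using cl_low[of p j, OF assms] cl_lt[of p j]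
    by (simp del: of_nat_diff)
qed

lemma geo10: "(\<Sum>m<k. (10::real)^m) * 9 = 10^k - 1"
  by (induction k) (auto simp: algebra_simps)

lemma inner_bound:
  fixes p x :: "nat \<Rightarrow> real" and B :: "nat set"
  assumes fin: "finite B" and p1: "\<And>j. j \<in> B \<Longrightarrow> p j \<ge> 1"
    and x0: "\<And>j. j \<in> B \<Longrightarrow> x j \<ge> 0"
    and small: "\<And>m. (\<Sum>j\<in>{j\<in>B. cl p j = m}. x j) \<le> 1/10"
    and iB: "i \<in> B"
  shows "(\<Sum>j\<in>{j\<in>B. p j \<le> p i}. p j * x j) \<le> 19/90 * p i"
proof -
  define k where "k = cl p i"
  have p0: "\<And>j. j \<in> B \<Longrightarrow> p j \<ge> 0" using p1 by (meson order_trans zero_le_one)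
  have k1: "k \<ge> 1" using cl_ge1[of p i] p1 iB k_def by auto
  have sub: "{j\<in>B. p j \<le> p i} \<subseteq> {j\<in>B. cl p j = k} \<union> {j\<in>B. cl p j < k}"
    using cl_mono[of p _ i] k_def by fastforce
  have "(\<Sum>j\<in>{j\<in>B. p j \<le> p i}. p j * x j) = (\<Sum>j\<in>{j\<in>B. p j \<le> p i}. if cl p j = k then p j * x j else 0)
          + (\<Sum>j\<in>{j\<in>B. p j \<le> p i}. if cl p j < k then p j * x j else 0)"
    unfolding sum.distrib[symmetric] using sub by (intro sum.cong) auto
  also have "(\<Sum>j\<in>{j\<in>B. p j \<le> p i}. if cl p j = k then p j * x j else 0) \<le> (\<Sum>j\<in>{j\<in>B. cl p j = k}. p i * x j)"
  proof -
    have "(\<Sum>j\<in>{j\<in>B. p j \<le> p i}. if cl p j = k then p j * x j else 0) = (\<Sum>j\<in>{j\<in>B. p j \<le> p i \<and> cl p j = k}. p j * x j)"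
      by (rule sum.mono_neutral_cong_right) (use fin in auto)
    also have "\<dots> \<le> (\<Sum>j\<in>{j\<in>B. p j \<le> p i \<and> cl p j = k}. p i * x j)"
      by (intro sum_mono mult_right_mono) (auto intro: x0)
    also have "\<dots> \<le> (\<Sum>j\<in>{j\<in>B. cl p j = k}. p i * x j)"
      by (rule sum_mono2) (use fin p1 x0 iB in \<open>auto intro!: mult_nonneg_nonneg order_trans[OF zero_le_one, of "p i"]\<close>)
    finally show ?thesis .
  qed
  also have "(\<Sum>j\<in>{j\<in>B. cl p j = k}. p i * x j) \<le> p i / 10"
    using small[of k] p1[OF iB] by (simp add: sum_distrib_left[symmetric])
  also have "(\<Sum>j\<in>{j\<in>B. p j \<le> p i}. if cl p j < k then p j * x j else 0) \<le> (\<Sum>j\<in>{j\<in>B. cl p j < k}. p j * x j)"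
  proof -
    have "(\<Sum>j\<in>{j\<in>B. p j \<le> p i}. if cl p j < k then p j * x j else 0) = (\<Sum>j\<in>{j\<in>B. p j \<le> p i \<and> cl p j < k}. p j * x j)"
      by (rule sum.mono_neutral_cong_right) (use fin in auto)
    also have "\<dots> \<le> (\<Sum>j\<in>{j\<in>B. cl p j < k}. p j * x j)"
      by (rule sum_mono2) (use fin p0 x0 in \<open>auto intro!: mult_nonneg_nonneg\<close>)
    finally show ?thesis .
  qed
  also have "(\<Sum>j\<in>{j\<in>B. cl p j < k}. p j * x j) \<le> (\<Sum>j\<in>{j\<in>B. cl p j < k}. 10^(cl p j) * x j)"
    by (intro sum_mono mult_right_mono) (auto intro: x0 less_imp_le[OF cl_lt])
  also have "\<dots> = (\<Sum>m\<in>{..<k}. \<Sum>j\<in>{j\<in>{j\<in>B. cl p j < k}. cl p j = m}. 10^(cl p j) * x j)"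
    by (rule sum.group[symmetric]) (use fin in auto)
  also have "\<dots> = (\<Sum>m\<in>{..<k}. 10^m * (\<Sum>j\<in>{j\<in>B. cl p j = m}. x j))"
    by (intro sum.cong refl) (auto simp: sum_distrib_left intro!: sum.cong)
  also have "\<dots> \<le> (\<Sum>m\<in>{..<k}. 10^m * (1/10))"
    by (intro sum_mono mult_left_mono small) auto
  also have "\<dots> = (10^k - 1) / 90"
  proof -
    have "(\<Sum>m\<in>{..<k}. (10::real)^m * (1/10)) = (\<Sum>m\<in>{..<k}. (10::real)^m) * (1/10)"
      by (simp add: sum_distrib_right)
    then show ?thesis using geo10[of k] by simp
  qed
  also have "\<dots> \<le> p i / 9"
  proof -
    have "(10::real)^k = 10 * 10^(k-1)" using k1 by (cases k) auto
    then show ?thesis using cl_low[of p i] p1[OF iB] k_def by simp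
  qed
  finally show ?thesis by simp
qed



lemma ungrouped_bound:
  fixes p x :: "nat \<Rightarrow> real" and B :: "nat set"
  assumes fin: "finite B" and p1: "\<And>j. j \<in> B \<Longrightarrow> p j \<ge> 1"
    and x0: "\<And>j. j \<in> B \<Longrightarrow> x j \<ge> 0"
    and small: "\<And>m. (\<Sum>j\<in>{j\<in>B. cl p j = m}. x j) \<le> 1/10"
  shows "(\<Sum>j\<in>B. p j * x j)^2 \<le> 19/45 * (\<Sum>j\<in>B. p j^2 * x j)"
proof -
  define u where "u j = p j * x j" for j
  have p0: "\<And>j. j \<in> B \<Longrightarrow> p j \<ge> 0" using p1 by (meson order_trans zero_le_one)
  have u0: "\<And>j. j \<in> B \<Longrightarrow> u j \<ge> 0" using p0 x0 u_def by simp
  define F where "F i j = (if p j \<le> p i then u i * u j else 0)" for i j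
  have "(\<Sum>j\<in>B. p j * x j)^2 = (\<Sum>i\<in>B. \<Sum>j\<in>B. u i * u j)"
    by (simp add: power2_eq_square sum_product u_def)
  also have "\<dots> \<le> (\<Sum>i\<in>B. \<Sum>j\<in>B. F i j + F j i)"
    by (intro sum_mono) (auto simp: F_def u0 mult.commute)
  also have "\<dots> = (\<Sum>i\<in>B. \<Sum>j\<in>B. F i j) + (\<Sum>i\<in>B. \<Sum>j\<in>B. F j i)"
    by (simp add: sum.distrib)
  also have "(\<Sum>i\<in>B. \<Sum>j\<in>B. F j i) = (\<Sum>i\<in>B. \<Sum>j\<in>B. F i j)"
    by (rule sum.swap)
  also have "(\<Sum>i\<in>B. \<Sum>j\<in>B. F i j) = (\<Sum>i\<in>B. u i * (\<Sum>j\<in>{j\<in>B. p j \<le> p i}. p j * x j))"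
    by (intro sum.cong refl) (auto simp: sum.inter_filter[OF fin] F_def sum_distrib_left u_def intro!: sum.cong)
  also have "\<dots> \<le> (\<Sum>i\<in>B. u i * (19/90 * p i))"
    by (intro sum_mono mult_left_mono inner_bound[OF fin p1 x0 small]) (auto intro: u0)
  also have "(\<Sum>i\<in>B. u i * (19/90 * p i)) + (\<Sum>i\<in>B. u i * (19/90 * p i)) = 19/45 * (\<Sum>j\<in>B. p j^2 * x j)"
    by (simp add: sum_distrib_left u_def power2_eq_square sum.distrib[symmetric] algebra_simps)
  finally show ?thesis by (simp add: add_mono)
qed



lemma group_bound:
  fixes p x :: "nat \<Rightarrow> real" and A :: "nat set"
  assumes fin: "finite A" and L: "L > 0" and pL: "\<And>j. j \<in> A \<Longrightarrow> L \<le> p j \<and> p j < 10 * L"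
    and x0: "\<And>j. j \<in> A \<Longrightarrow> x j \<ge> 0" and m: "(\<Sum>j\<in>A. x j) \<ge> 1/10"
  shows "(\<Sum>j\<in>A. p j^2 * x j) \<le> 100 * (\<Sum>j\<in>A. p j * x j)^2"
proof -
  define V where "V = (\<Sum>j\<in>A. p j * x j)"
  have "L/10 \<le> L * (\<Sum>j\<in>A. x j)" using m L by simp
  also have "\<dots> = (\<Sum>j\<in>A. L * x j)" by (simp add: sum_distrib_left)
  also have "\<dots> \<le> V" unfolding V_def by (intro sum_mono mult_right_mono) (auto dest: pL intro: x0)
  finally have V1: "L/10 \<le> V" .
  have "(\<Sum>j\<in>A. p j^2 * x j) \<le> (\<Sum>j\<in>A. (10*L) * (p j * x j))"
  proof (intro sum_mono)
    fix j assume j: "j \<in> A"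
    have "p j * (p j * x j) \<le> (10*L) * (p j * x j)"
      using pL[OF j] x0[OF j] L by (intro mult_right_mono) auto
    then show "p j^2 * x j \<le> (10*L) * (p j * x j)" by (simp add: power2_eq_square algebra_simps)
  qed
  also have "\<dots> = 10 * L * V" by (simp add: V_def sum_distrib_left)
  also have "\<dots> \<le> (100 * V) * V"
  proof (rule mult_right_mono)
    show "10 * L \<le> 100 * V" using V1 by simp
    show "0 \<le> V" using V1 L by simp
  qed
  finally show ?thesis by (simp add: V_def power2_eq_square)
qed

lemma final_alg:
  fixes s \<sigma> a b Z D P \<zeta> :: real
  assumes z: "0 < \<zeta>" "\<zeta> \<le> 1" and s0: "s \<ge> 0" and sg0: "\<sigma> \<ge> 0" and a0: "a \<ge> 0" and b0: "b \<ge> 0"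
    and F1: "(a+b)^2 \<le> Z" and F2: "a^2 \<le> Z - \<sigma>" and F3: "Z \<ge> s + \<sigma>"
    and F4: "b^2 \<le> 19/45 * \<sigma>" and F5: "D + \<zeta> * P \<ge> \<zeta>/100 * s"
  shows "2*(s+\<sigma>) + (a+b)^2 - D - \<zeta>*P \<le> (3/2 - \<zeta>/20000) * ((s+\<sigma>) + Z)"
proof -
  define c where "c = \<zeta>/20000"
  define Sq where "Sq = s + \<sigma>"
  define Wq where "Wq = (a+b)^2"
  have c0: "0 < c" "c \<le> 1/20000" using z c_def by auto
  have Sq0: "Sq \<ge> 0" using s0 sg0 Sq_def by simp
  have cS: "c * Sq \<ge> 0" using c0 Sq0 by simp
  have key: "2*Sq + Wq - 200 * c * s \<le> (3/2 - c) * (Sq + Z)"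
  proof -
    define cS where "cS = c*Sq"
    define cs where "cs = c * s"
    define cZ where "cZ = c*Z"
    have R: "(3/2 - c) * (Sq + Z) = 3/2*Sq + 3/2*Z - cS - cZ" by (simp add: cS_def cZ_def algebra_simps)
    have L: "2*Sq + Wq - 200 * c * s = 2*Sq + Wq - 200*cs" by (simp add: cs_def)
    have cs0: "cs \<ge> 0" using c0 s0 cs_def by simp
    have cS0: "cS \<ge> 0" using c0 Sq0 cS_def by simp
    have cZS: "cZ \<ge> cS" using F3 c0 Sq_def cS_def cZ_def by (simp add: mult_left_mono)
    have ZS: "Z \<ge> Sq" using F3 Sq_def by simp
    have cSs: "20000*cS \<le> Sq"
    proof -
      have "c*Sq \<le> (1/20000)*Sq" using c0 Sq0 by (intro mult_right_mono) auto
      then show ?thesis using cS_def by simp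
    qed
    have cZS2: "20000*(cZ - cS) \<le> Z - Sq"
    proof -
      have "c*(Z-Sq) \<le> (1/20000)*(Z-Sq)" using c0 ZS by (intro mult_right_mono) auto
      then show ?thesis using cZ_def cS_def by (simp add: algebra_simps)
    qed
    show ?thesis
    proof (cases "Wq \<le> Sq - 2*cS")
      case True
      show ?thesis unfolding R L using True cs0 cZS2 ZS by argo
    next
      case nb: False
      show ?thesis
      proof (cases "Wq \<ge> Sq + 5*cS")
        case True
        have ZW: "Z \<ge> Wq" using F1 Wq_def by simp
        have m1: "(3/2 - c) * Z \<ge> (3/2 - c) * Wq" using ZW c0 by (intro mult_left_mono) auto
        have "(1/2 - c) * Wq \<ge> (1/2 - c) * ((1+5*c)*Sq)" using True c0 cS_def
          by (intro mult_left_mono) (auto simp: algebra_simps)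
        moreover have "(1/2 - c) * ((1+5*c)*Sq) \<ge> (1/2 + c) * Sq"
        proof -
          have "(1/2 - c) * (1+5*c) \<ge> 1/2 + c" using c0 by (simp add: algebra_simps power2_eq_square)
          then have "((1/2 - c) * (1+5*c)) * Sq \<ge> (1/2 + c) * Sq" using Sq0 by (rule mult_right_mono)
          then show ?thesis by (simp add: mult.assoc)
        qed
        ultimately have m2: "(1/2 - c) * Wq \<ge> (1/2 + c) * Sq" by linarith
        have "2 * Sq + Wq - 200 * c * s \<le> (3/2 - c) * Sq + (3/2 - c) * Wq"
          using m2 cs0 cs_def by (simp add: algebra_simps)
        also have "\<dots> \<le> (3/2 - c) * (Sq + Z)" using m1 by (simp add: algebra_simps)
        finally show ?thesis .
      next
        case False
        then have Wup: "Wq \<le> Sq + 5*cS" by simp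
        show ?thesis
        proof (cases "s * 25 \<ge> Sq")
          case True
          have "cs * 25 \<ge> cS" using True c0 cs_def cS_def
            by (metis mult.assoc mult_left_mono less_imp_le)
          then show ?thesis unfolding R L using Wup cZS2 ZS cs0 by argo
        next
          case sF: False
          have sq: "0 \<le> 2*(a - b/2)^2" by simp
          have W3: "Wq \<le> 3 * a^2 + 3/2 * b^2"
            using sq unfolding Wq_def by (simp add: power2_eq_square algebra_simps)
          have a9: "a^2 * 9 > Sq"
          proof (rule ccontr)
            assume "\<not> ?thesis"
            then have "a^2 * 9 \<le> Sq" by simp
            moreover have "b^2 \<le> 19/45 * Sq" using F4 s0 Sq_def by simp
            ultimately have "Wq \<le> 29/30 * Sq" using W3 by simp
            then show False using nb cSs Sq0 by argo
          qed
          have ZS2: "Z - Sq \<ge> 16/225 * Sq" using F2 a9 sF Sq_def by simp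
          then show ?thesis unfolding R L using Wup ZS2 cSs cs0 Sq0 cZS2 by argo
        qed
      qed
    qed
  qed
  have e200: "200 * c * s = \<zeta>/100 * s" by (simp add: c_def)
  have "2*(s+\<sigma>) + (a+b)^2 - D - \<zeta>*P \<le> 2*Sq + Wq - 200 * c * s" unfolding e200 using F5 Sq_def Wq_def by (smt (verit))
  also note key
  finally show ?thesis using c_def Sq_def by simp
qed



lemma offdiag:
  fixes v p :: "nat \<Rightarrow> real" and y :: "nat \<Rightarrow> nat \<Rightarrow> real"
  assumes fin: "finite N" and y0: "\<And>i j. i \<in> N \<Longrightarrow> j \<in> N \<Longrightarrow> y i j \<ge> 0"
    and v: "\<And>i. i \<in> N \<Longrightarrow> 0 \<le> v i \<and> v i \<le> p i"
  shows "(\<Sum>i\<in>N. \<Sum>j\<in>N. v i * y i j * v j) + (\<Sum>i\<in>N. (p i^2 - v i^2) * y i i) \<le> (\<Sum>i\<in>N. \<Sum>j\<in>N. p i * y i j * p j)"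
proof -
  have "(\<Sum>i\<in>N. \<Sum>j\<in>N. v i * y i j * v j) + (\<Sum>i\<in>N. (p i^2 - v i^2) * y i i)
      = (\<Sum>i\<in>N. (\<Sum>j\<in>N. v i * y i j * v j) + (p i^2 - v i^2) * y i i)" by (simp add: sum.distrib)
  also have "\<dots> \<le> (\<Sum>i\<in>N. \<Sum>j\<in>N. p i * y i j * p j)"
  proof (rule sum_mono)
    fix i assume i: "i \<in> N"
    have d: "\<And>j. j \<in> N \<Longrightarrow> 0 \<le> p i * y i j * p j - v i * y i j * v j"
    proof -
      fix j assume j: "j \<in> N"
      have "v i * v j \<le> p i * p j" using v[OF i] v[OF j] by (intro mult_mono) auto
      then have "(v i * v j) * y i j \<le> (p i * p j) * y i j" using y0[OF i j] by (rule mult_right_mono)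
      then show "0 \<le> p i * y i j * p j - v i * y i j * v j" by (simp add: algebra_simps)
    qed
    have "(p i^2 - v i^2) * y i i = p i * y i i * p i - v i * y i i * v i" by (simp add: power2_eq_square algebra_simps)
    also have "\<dots> \<le> (\<Sum>j\<in>N. p i * y i j * p j - v i * y i j * v j)"
      using member_le_sum[of i N "\<lambda>j. p i * y i j * p j - v i * y i j * v j"] d i fin by simp
    also have "\<dots> = (\<Sum>j\<in>N. p i * y i j * p j) - (\<Sum>j\<in>N. v i * y i j * v j)" by (simp add: sum_subtractf)
    finally show "(\<Sum>j\<in>N. v i * y i j * v j) + (p i^2 - v i^2) * y i i \<le> (\<Sum>j\<in>N. p i * y i j * p j)" by simp
  qed
  finally show ?thesis .
qed

theorem mainTheorem9:
  fixes \<zeta> :: real and n' :: nat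
    and p x :: "nat \<Rightarrow> real" and y :: "nat \<Rightarrow> nat \<Rightarrow> real"
    and \<G> :: "nat set set"
    and M :: "'a measure" and X :: "nat \<Rightarrow> 'a \<Rightarrow> real"
  assumes zeta: "0 < \<zeta>" "\<zeta> \<le> 1"
    and n_pos: "n' \<ge> 1"
    and p_ge: "\<And>j. j \<in> {1..n'} \<Longrightarrow> p j \<ge> 1"
    and x_range: "\<And>j. j \<in> {1..n'} \<Longrightarrow> 0 \<le> x j \<and> x j \<le> 1"
    and y_sym: "\<And>j j'. j \<in> {1..n'} \<Longrightarrow> j' \<in> {1..n'} \<Longrightarrow> y j j' = y j' j"
    and y_nonneg: "\<And>j j'. j \<in> {1..n'} \<Longrightarrow> j' \<in> {1..n'} \<Longrightarrow> y j j' \<ge> 0"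
    and y_diag: "\<And>j. j \<in> {1..n'} \<Longrightarrow> y j j = x j"
    and psd: "psd_on n' (sdp_matrix x y)"
    and G_disj: "\<And>A B. A \<in> \<G> \<Longrightarrow> B \<in> \<G> \<Longrightarrow> A \<noteq> B \<Longrightarrow> A \<inter> B = {}"
    and G_sub: "\<And>A. A \<in> \<G> \<Longrightarrow> A \<noteq> {} \<and> A \<subseteq> {1..n'}"
    and G_class: "\<And>A. A \<in> \<G> \<Longrightarrow> \<exists>k. \<forall>j\<in>A. has_class p j k"
    and G_mass: "\<And>A. A \<in> \<G> \<Longrightarrow> (\<Sum>j\<in>A. x j) \<ge> 1/10"
    and Gbar_small: "\<And>k. (\<Sum>j\<in>{j\<in>{1..n'} - \<Union>\<G>. has_class p j k}. x j) < 1/10"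
    and M: "prob_space M"
    and X_meas: "\<And>j. j \<in> {1..n'} \<Longrightarrow> X j \<in> borel_measurable M"
    and X_01: "\<And>j \<omega>. j \<in> {1..n'} \<Longrightarrow> \<omega> \<in> space M \<Longrightarrow> X j \<omega> \<in> {0, 1}"
    and X_mean: "\<And>j. j \<in> {1..n'} \<Longrightarrow> (\<integral>\<omega>. X j \<omega> \<partial>M) = x j"
    and X_corr: "\<And>j j'. j \<in> {1..n'} \<Longrightarrow> j' \<in> {1..n'} \<Longrightarrow> j \<noteq> j' \<Longrightarrow>
                   (\<integral>\<omega>. X j \<omega> * X j' \<omega> \<partial>M) \<le> x j * x j'"
    and X_corr_G: "\<And>A j j'. A \<in> \<G> \<Longrightarrow> j \<in> A \<Longrightarrow> j' \<in> A \<Longrightarrow> j \<noteq> j' \<Longrightarrow>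
                   (\<integral>\<omega>. X j \<omega> * X j' \<omega> \<partial>M) \<le> (1 - \<zeta>) * x j * x j'"
  shows "(\<integral>\<omega>. (\<Sum>j=1..n'. p j * X j \<omega> * (\<Sum>i=1..j. p i * X i \<omega>)) \<partial>M)
         \<le> (3/2 - \<zeta> / 20000) * (\<Sum>j=1..n'. p j * (\<Sum>i=1..j. p i * y j i))"
proof -
  interpret P: prob_space M by (rule M)
  define N where "N = {1..n'}"
  define GU where "GU = \<Union>\<G>"
  define Gb where "Gb = N - GU"
  define c where "c = \<zeta> / 20000"
  have finN: "finite N" by (simp add: N_def)
  have GUN: "GU \<subseteq> N" using G_sub by (auto simp: GU_def N_def)
  have finG: "finite \<G>"
  proof -
    have "\<G> \<subseteq> Pow N" using G_sub by (auto simp: N_def)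
    then show ?thesis using finN by (meson finite_Pow_iff finite_subset)
  qed
  have finA: "\<And>A. A \<in> \<G> \<Longrightarrow> finite A" using G_sub finN N_def by (meson finite_subset)
  have finGU: "finite GU" using GUN finN finite_subset by blast
  have finGb: "finite Gb" using finN Gb_def by simp
  have p1: "\<And>j. j \<in> N \<Longrightarrow> p j \<ge> 1" using p_ge N_def by simp
  have p0: "\<And>j. j \<in> N \<Longrightarrow> p j \<ge> 0" using p1 by (meson order_trans zero_le_one)
  have x0: "\<And>j. j \<in> N \<Longrightarrow> x j \<ge> 0" using x_range N_def by simp
  define u where "u j = p j * x j" for j
  have u0: "\<And>j. j \<in> N \<Longrightarrow> u j \<ge> 0" using p0 x0 u_def by simp
  define sg where "sg i j \<longleftrightarrow> (\<exists>A\<in>\<G>. i \<in> A \<and> j \<in> A)" for i j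
  have sg_sym: "sg i j = sg j i" for i j by (auto simp: sg_def)
  have sgA: "\<And>A i j. A \<in> \<G> \<Longrightarrow> i \<in> A \<Longrightarrow> sg i j \<longleftrightarrow> j \<in> A"
    using G_disj unfolding sg_def by blast
  define e where "e i j = (\<integral>\<omega>. X i \<omega> * X j \<omega> \<partial>M)" for i j
  have intXX: "\<And>i j. i \<in> N \<Longrightarrow> j \<in> N \<Longrightarrow> integrable M (\<lambda>\<omega>. X i \<omega> * X j \<omega>)"
  proof -
    fix i j assume i: "i \<in> N" and j: "j \<in> N"
    show "integrable M (\<lambda>\<omega>. X i \<omega> * X j \<omega>)"
    proof (rule P.integrable_const_bound[where B=1])
      show "AE \<omega> in M. norm (X i \<omega> * X j \<omega>) \<le> 1"
      proof (rule AE_I2)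
        fix \<omega> assume "\<omega> \<in> space M"
        then have "X i \<omega> \<in> {0, 1}" "X j \<omega> \<in> {0, 1}" using X_01 i j N_def by auto
        then show "norm (X i \<omega> * X j \<omega>) \<le> 1" by auto
      qed
      show "(\<lambda>\<omega>. X i \<omega> * X j \<omega>) \<in> borel_measurable M"
        using X_meas i j N_def by simp
    qed
  qed
  define g where "g j i = (if i = j then x j else x j * x i - (if sg j i then \<zeta> * x j * x i else 0))" for j i
  have intj: "\<And>j. j \<in> {1..n'} \<Longrightarrow> integrable M (\<lambda>\<omega>. \<Sum>i=1..j. p j * p i * (X j \<omega> * X i \<omega>))"
  proof -
    fix j assume j: "j \<in> {1..n'}"
    show "integrable M (\<lambda>\<omega>. \<Sum>i=1..j. p j * p i * (X j \<omega> * X i \<omega>))"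
    proof (rule Bochner_Integration.integrable_sum)
      fix i assume i: "i \<in> {1..j}"
      have "integrable M (\<lambda>\<omega>. X j \<omega> * X i \<omega>)" using intXX[of j i] j i N_def by simp
      then show "integrable M (\<lambda>\<omega>. p j * p i * (X j \<omega> * X i \<omega>))" by simp
    qed
  qed
  have LHS: "(\<integral>\<omega>. (\<Sum>j=1..n'. p j * X j \<omega> * (\<Sum>i=1..j. p i * X i \<omega>)) \<partial>M)
      = (\<Sum>j=1..n'. \<Sum>i=1..j. p j * p i * e j i)"
  proof -
    have "(\<lambda>\<omega>. (\<Sum>j=1..n'. p j * X j \<omega> * (\<Sum>i=1..j. p i * X i \<omega>)))
        = (\<lambda>\<omega>. (\<Sum>j=1..n'. \<Sum>i=1..j. p j * p i * (X j \<omega> * X i \<omega>)))"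
      by (auto simp: sum_distrib_left algebra_simps intro!: sum.cong)
    moreover have "(\<integral>\<omega>. (\<Sum>j=1..n'. \<Sum>i=1..j. p j * p i * (X j \<omega> * X i \<omega>)) \<partial>M)
        = (\<Sum>j=1..n'. \<integral>\<omega>. (\<Sum>i=1..j. p j * p i * (X j \<omega> * X i \<omega>)) \<partial>M)"
      by (rule Bochner_Integration.integral_sum[where I="{1..n'}" and f="\<lambda>j \<omega>. \<Sum>i=1..j. p j * p i * (X j \<omega> * X i \<omega>)"])
         (rule intj)
    moreover have "\<And>j. j \<in> {1..n'} \<Longrightarrow> (\<integral>\<omega>. (\<Sum>i=1..j. p j * p i * (X j \<omega> * X i \<omega>)) \<partial>M)
        = (\<Sum>i=1..j. p j * p i * e j i)"
    proof -
      fix j assume j: "j \<in> {1..n'}"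
      have "(\<integral>\<omega>. (\<Sum>i=1..j. p j * p i * (X j \<omega> * X i \<omega>)) \<partial>M) = (\<Sum>i=1..j. \<integral>\<omega>. p j * p i * (X j \<omega> * X i \<omega>) \<partial>M)"
        by (rule Bochner_Integration.integral_sum) (use j intXX N_def in auto)
      then show "(\<integral>\<omega>. (\<Sum>i=1..j. p j * p i * (X j \<omega> * X i \<omega>)) \<partial>M) = (\<Sum>i=1..j. p j * p i * e j i)"
        by (simp add: e_def)
    qed
    ultimately show ?thesis by simp
  qed
  have eg: "\<And>i j. j \<in> N \<Longrightarrow> i \<in> N \<Longrightarrow> e j i \<le> g j i"
  proof -
    fix i j assume j: "j \<in> N" and i: "i \<in> N"
    show "e j i \<le> g j i"
    proof (cases "i = j")
      case True
      have "e j j = (\<integral>\<omega>. X j \<omega> \<partial>M)"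
        unfolding e_def by (rule Bochner_Integration.integral_cong) (use X_01 j N_def in fastforce)+
      then show ?thesis using True X_mean j N_def g_def by simp
    next
      case False
      show ?thesis
      proof (cases "sg j i")
        case True
        then obtain A where "A \<in> \<G>" "j \<in> A" "i \<in> A" by (auto simp: sg_def)
        then show ?thesis using X_corr_G[of A j i] False True by (simp add: e_def g_def algebra_simps)
      next
        case sF: False
        then show ?thesis using X_corr[of j i] False i j N_def by (simp add: e_def g_def)
      qed
    qed
  qed
  define L' where "L' = (\<Sum>j=1..n'. \<Sum>i=1..j. p j * p i * g j i)"
  have LL': "(\<Sum>j=1..n'. \<Sum>i=1..j. p j * p i * e j i) \<le> L'"
    unfolding L'_def
    by (intro sum_mono mult_left_mono eg) (auto simp: N_def intro!: mult_nonneg_nonneg p0)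
  define U where "U = (\<Sum>i\<in>N. u i)"
  define S where "S = (\<Sum>i\<in>N. p i^2 * x i)"
  define D where "D = (\<Sum>i\<in>N. u i^2)"
  define P where "P = (\<Sum>i\<in>N. \<Sum>j\<in>N. if i \<noteq> j \<and> sg i j then u i * u j else 0)"
  have gsym: "\<And>i j. i \<in> {1..n'} \<Longrightarrow> j \<in> {1..n'} \<Longrightarrow> p i * p j * g i j = p j * p i * g j i"
    by (auto simp: g_def sg_sym algebra_simps)
  have L'2: "2 * L' = (\<Sum>i=1..n'. \<Sum>j=1..n'. p i * p j * g i j) + (\<Sum>i=1..n'. p i * p i * g i i)"
    unfolding L'_def by (rule tri_sum) (use gsym in auto)
  have gfull: "(\<Sum>i\<in>N. \<Sum>j\<in>N. p i * p j * g i j) = U^2 + S - D - \<zeta> * P"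
  proof -
    have "\<And>i j. p i * p j * g i j = u i * u j + (if i = j then p i^2 * x i - u i^2 else 0)
                - \<zeta> * (if i \<noteq> j \<and> sg i j then u i * u j else 0)"
      by (auto simp: g_def u_def power2_eq_square algebra_simps)
    then have "(\<Sum>i\<in>N. \<Sum>j\<in>N. p i * p j * g i j) = (\<Sum>i\<in>N. \<Sum>j\<in>N. u i * u j)
        + (\<Sum>i\<in>N. \<Sum>j\<in>N. if i = j then p i^2 * x i - u i^2 else 0) - \<zeta> * P"
      by (simp add: sum.distrib sum_subtractf sum_distrib_left P_def)
    also have "(\<Sum>i\<in>N. \<Sum>j\<in>N. u i * u j) = U^2"
      by (simp add: U_def power2_eq_square sum_product)
    also have "(\<Sum>i\<in>N. \<Sum>j\<in>N. if i = j then p i^2 * x i - u i^2 else 0) = S - D"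
      using finN by (simp add: S_def D_def sum_subtractf eq_commute[of _ "_::nat"] cong: if_cong)
    finally show ?thesis by simp
  qed
  have L'f: "2 * L' = U^2 + 2 * S - D - \<zeta> * P"
  proof -
    have "(\<Sum>i=1..n'. p i * p i * g i i) = S" by (simp add: S_def N_def g_def power2_eq_square)
    then show ?thesis using L'2 gfull N_def by simp
  qed
  define Z where "Z = (\<Sum>i\<in>N. \<Sum>j\<in>N. p i * y i j * p j)"
  define R where "R = (\<Sum>j=1..n'. p j * (\<Sum>i=1..j. p i * y j i))"
  have R2: "2 * R = Z + S"
  proof -
    have "R = (\<Sum>j=1..n'. \<Sum>i=1..j. p j * y j i * p i)"
      by (simp add: R_def sum_distrib_left algebra_simps)
    then have "2 * R = (\<Sum>i=1..n'. \<Sum>j=1..n'. p i * y i j * p j) + (\<Sum>i=1..n'. p i * y i i * p i)"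
      using tri_sum[of n' "\<lambda>j i. p j * y j i * p i"] y_sym by (simp add: algebra_simps)
    moreover have "(\<Sum>i=1..n'. p i * y i i * p i) = S"
      using y_diag by (simp add: S_def N_def power2_eq_square algebra_simps)
    ultimately show ?thesis by (simp add: Z_def N_def)
  qed
  define s where "s = (\<Sum>i\<in>GU. p i^2 * x i)"
  define \<sigma> where "\<sigma> = (\<Sum>i\<in>Gb. p i^2 * x i)"
  define a where "a = (\<Sum>i\<in>GU. u i)"
  define b where "b = (\<Sum>i\<in>Gb. u i)"
  have Ssplit: "S = s + \<sigma>" unfolding S_def s_def \<sigma>_def Gb_def
    using sum.subset_diff[OF GUN finN, of "\<lambda>i. p i^2 * x i"] by (metis add.commute)
  have Usplit: "U = a + b" unfolding U_def a_def b_def Gb_def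
    using sum.subset_diff[OF GUN finN, of u] by (metis add.commute)
  have s0: "s \<ge> 0" unfolding s_def using GUN x0 by (intro sum_nonneg) auto
  have sg0: "\<sigma> \<ge> 0" unfolding \<sigma>_def Gb_def using x0 by (intro sum_nonneg) auto
  have a0: "a \<ge> 0" unfolding a_def using GUN u0 by (intro sum_nonneg) auto
  have b0: "b \<ge> 0" unfolding b_def Gb_def using u0 by (intro sum_nonneg) auto
  have y0: "\<And>i j. i \<in> N \<Longrightarrow> j \<in> N \<Longrightarrow> y i j \<ge> 0" using y_nonneg N_def by simp
  have F1: "(a+b)^2 \<le> Z"
  proof -
    have "(\<Sum>i=1..n'. p i * x i)^2 \<le> (\<Sum>i=1..n'. \<Sum>j=1..n'. p i * y i j * p j)"
      by (rule psd_quad[OF psd])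
    then show ?thesis using Usplit by (simp add: U_def u_def Z_def N_def)
  qed
  have F2: "a^2 \<le> Z - \<sigma>"
  proof -
    define v where "v i = (if i \<in> GU then p i else 0)" for i
    have "(\<Sum>i=1..n'. v i * x i)^2 \<le> (\<Sum>i=1..n'. \<Sum>j=1..n'. v i * y i j * v j)"
      by (rule psd_quad[OF psd])
    moreover have "(\<Sum>i=1..n'. v i * x i) = a"
    proof -
      have "(\<Sum>i\<in>N. v i * x i) = (\<Sum>i\<in>N. if i \<in> GU then u i else 0)"
        by (intro sum.cong) (auto simp: v_def u_def)
      also have "\<dots> = (\<Sum>i\<in>N \<inter> GU. u i)" by (simp add: sum.inter_restrict[OF finN])
      also have "N \<inter> GU = GU" using GUN by auto
      finally show ?thesis by (simp add: a_def N_def)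
    qed
    moreover have "(\<Sum>i\<in>N. \<Sum>j\<in>N. v i * y i j * v j) + (\<Sum>i\<in>N. (p i^2 - v i^2) * y i i) \<le> Z"
      unfolding Z_def by (rule offdiag[OF finN y0]) (auto simp: v_def intro: p0)
    moreover have "(\<Sum>i\<in>N. (p i^2 - v i^2) * y i i) = \<sigma>"
    proof -
      have "(\<Sum>i\<in>N. (p i^2 - v i^2) * y i i) = (\<Sum>i\<in>N. if i \<in> Gb then p i^2 * x i else 0)"
        by (intro sum.cong) (auto simp: v_def Gb_def y_diag N_def)
      also have "\<dots> = (\<Sum>i\<in>N \<inter> Gb. p i^2 * x i)" by (simp add: sum.inter_restrict[OF finN])
      also have "N \<inter> Gb = Gb" using Gb_def by auto
      finally show ?thesis by (simp add: \<sigma>_def)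
    qed
    ultimately show ?thesis by (simp add: N_def)
  qed
  have F3: "Z \<ge> s + \<sigma>"
  proof -
    have "(\<Sum>i\<in>N. \<Sum>j\<in>N. 0 * y i j * 0) + (\<Sum>i\<in>N. (p i^2 - 0^2) * y i i) \<le> Z"
      unfolding Z_def by (rule offdiag[OF finN y0]) (auto intro: p0)
    moreover have "(\<Sum>i\<in>N. (p i^2 - 0^2) * y i i) = S"
      by (auto simp: S_def y_diag N_def intro!: sum.cong)
    ultimately show ?thesis using Ssplit by simp
  qed
  have F4: "b^2 \<le> 19/45 * \<sigma>"
  proof -
    have small: "\<And>m. (\<Sum>j\<in>{j\<in>Gb. cl p j = m}. x j) \<le> 1/10"
    proof -
      fix m
      have "(\<Sum>j\<in>{j\<in>Gb. cl p j = m}. x j) \<le> (\<Sum>j\<in>{j\<in>{1..n'} - \<Union>\<G>. has_class p j (int m)}. x j)"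
      proof (rule sum_mono2)
        show "finite {j\<in>{1..n'} - \<Union>\<G>. has_class p j (int m)}" by simp
        show "{j\<in>Gb. cl p j = m} \<subseteq> {j\<in>{1..n'} - \<Union>\<G>. has_class p j (int m)}"
          using cl_has p1 by (auto simp: Gb_def N_def GU_def)
        show "\<And>j. j \<in> {j\<in>{1..n'} - \<Union>\<G>. has_class p j (int m)} - {j\<in>Gb. cl p j = m} \<Longrightarrow> 0 \<le> x j"
          using x0 N_def by auto
      qed
      also have "\<dots> < 1/10" by (rule Gbar_small)
      finally show "(\<Sum>j\<in>{j\<in>Gb. cl p j = m}. x j) \<le> 1/10" by simp
    qed
    have "(\<Sum>j\<in>Gb. p j * x j)^2 \<le> 19/45 * (\<Sum>j\<in>Gb. p j^2 * x j)"
      by (rule ungrouped_bound[OF finGb _ _ small]) (auto simp: Gb_def intro: p1 x0)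
    then show ?thesis by (simp add: b_def \<sigma>_def u_def)
  qed
  have F5: "D + \<zeta> * P \<ge> \<zeta>/100 * s"
  proof -
    define inner where "inner i = (\<Sum>j\<in>N. if i \<noteq> j \<and> sg i j then u i * u j else 0)" for i
    have inner0: "\<And>i. i \<in> N - GU \<Longrightarrow> inner i = 0"
      by (auto simp: inner_def sg_def GU_def intro!: sum.neutral)
    have innerA: "\<And>A i. A \<in> \<G> \<Longrightarrow> i \<in> A \<Longrightarrow> inner i = (\<Sum>j\<in>A. if i \<noteq> j then u i * u j else 0)"
    proof -
      fix A i assume A: "A \<in> \<G>" and i: "i \<in> A"
      have AN: "A \<subseteq> N" using G_sub A N_def by auto
      have "inner i = (\<Sum>j\<in>N. if j \<in> A then (if i \<noteq> j then u i * u j else 0) else 0)"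
        unfolding inner_def using sgA[OF A i] by (intro sum.cong) auto
      also have "\<dots> = (\<Sum>j\<in>N \<inter> A. if i \<noteq> j then u i * u j else 0)"
        by (simp add: sum.inter_restrict[OF finN])
      also have "N \<inter> A = A" using AN by auto
      finally show "inner i = (\<Sum>j\<in>A. if i \<noteq> j then u i * u j else 0)" .
    qed
    have Pdec: "P = (\<Sum>i\<in>GU. inner i)"
    proof -
      have "P = (\<Sum>i\<in>N - GU. inner i) + (\<Sum>i\<in>GU. inner i)"
        unfolding P_def inner_def using sum.subset_diff[OF GUN finN] by simp
      then show ?thesis using inner0 by simp
    qed
    have disj: "\<forall>A\<in>\<G>. \<forall>B\<in>\<G>. A \<noteq> B \<longrightarrow> A \<inter> B = {}" using G_disj by blast
    have finAll: "\<forall>A\<in>\<G>. finite A" using finA by blast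
    have sqA: "\<And>A. A \<in> \<G> \<Longrightarrow> (\<Sum>i\<in>A. u i)^2 = (\<Sum>i\<in>A. u i^2 + inner i)"
    proof -
      fix A assume A: "A \<in> \<G>"
      have "(\<Sum>i\<in>A. u i)^2 = (\<Sum>i\<in>A. \<Sum>j\<in>A. u i * u j)" by (simp add: power2_eq_square sum_product)
      also have "\<dots> = (\<Sum>i\<in>A. u i^2 + inner i)"
      proof (rule sum.cong[OF refl])
        fix i assume i: "i \<in> A"
        have "(\<Sum>j\<in>A. u i * u j) = (\<Sum>j\<in>A. (if i = j then u i * u j else 0) + (if i \<noteq> j then u i * u j else 0))"
          by (intro sum.cong) auto
        also have "\<dots> = (\<Sum>j\<in>A. if i = j then u i * u j else 0) + (\<Sum>j\<in>A. if i \<noteq> j then u i * u j else 0)"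
          by (rule sum.distrib)
        also have "(\<Sum>j\<in>A. if i = j then u i * u j else 0) = u i^2"
          using finA[OF A] i by (simp add: power2_eq_square)
        finally show "(\<Sum>j\<in>A. u i * u j) = u i^2 + inner i" using innerA[OF A i] by simp
      qed
      finally show "(\<Sum>i\<in>A. u i)^2 = (\<Sum>i\<in>A. u i^2 + inner i)" .
    qed
    have "s = (\<Sum>A\<in>\<G>. \<Sum>i\<in>A. p i^2 * x i)"
      unfolding s_def GU_def by (simp add: sum.Union_disjoint[OF finAll disj])
    also have "\<dots> \<le> (\<Sum>A\<in>\<G>. 100 * (\<Sum>i\<in>A. u i)^2)"
    proof (rule sum_mono)
      fix A assume A: "A \<in> \<G>"
      obtain k where k: "\<forall>j\<in>A. has_class p j k" using G_class[OF A] by blast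
      define L where "L = (10::real) powi (k - 1)"
      have L0: "L > 0" by (simp add: L_def)
      have L10: "(10::real) powi k = 10 * L"
      proof -
        have "(10::real) powi ((k - 1) + 1) = 10 * 10 powi (k - 1)" by (rule power_int_add_1') simp
        then show ?thesis by (simp add: L_def)
      qed
      have AN: "A \<subseteq> N" using G_sub A N_def by auto
      have "(\<Sum>j\<in>A. p j^2 * x j) \<le> 100 * (\<Sum>j\<in>A. p j * x j)^2"
      proof (rule group_bound[OF finA[OF A] L0])
        show "\<And>j. j \<in> A \<Longrightarrow> L \<le> p j \<and> p j < 10 * L"
          using k L10 by (auto simp: has_class_def L_def)
        show "\<And>j. j \<in> A \<Longrightarrow> 0 \<le> x j" using AN x0 by auto
        show "1/10 \<le> (\<Sum>j\<in>A. x j)" by (rule G_mass[OF A])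
      qed
      then show "(\<Sum>i\<in>A. p i^2 * x i) \<le> 100 * (\<Sum>i\<in>A. u i)^2" by (simp add: u_def)
    qed
    also have "\<dots> = 100 * (\<Sum>A\<in>\<G>. \<Sum>i\<in>A. u i^2 + inner i)"
      by (simp add: sum_distrib_left sqA)
    also have "(\<Sum>A\<in>\<G>. \<Sum>i\<in>A. u i^2 + inner i) = (\<Sum>i\<in>GU. u i^2 + inner i)"
      unfolding GU_def by (simp add: sum.Union_disjoint[OF finAll disj])
    also have "\<dots> = (\<Sum>i\<in>GU. u i^2) + P" by (simp add: sum.distrib Pdec)
    also have "(\<Sum>i\<in>GU. u i^2) \<le> D"
      unfolding D_def by (rule sum_mono2[OF finN GUN]) simp
    finally have sDP: "s \<le> 100 * (D + P)" by simp
    have D0: "D \<ge> 0" unfolding D_def by (simp add: sum_nonneg)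
    have "\<zeta>/100 * s \<le> \<zeta>/100 * (100 * (D + P))" using sDP zeta by (intro mult_left_mono) auto
    also have "\<dots> = \<zeta> * D + \<zeta> * P" by (simp add: algebra_simps)
    also have "\<zeta> * D \<le> 1 * D" using zeta D0 by (intro mult_right_mono) auto
    finally show ?thesis by simp
  qed
  have fin: "2*(s+\<sigma>) + (a+b)^2 - D - \<zeta>*P \<le> (3/2 - \<zeta>/20000) * ((s+\<sigma>) + Z)"
    by (rule final_alg[OF zeta s0 sg0 a0 b0 F1 F2 F3 F4 F5])
  have e1: "2 * L' = 2*(s+\<sigma>) + (a+b)^2 - D - \<zeta>*P" using L'f Ssplit Usplit by (simp add: algebra_simps)
  have e2: "2 * R = (s+\<sigma>) + Z" using R2 Ssplit by simp
  have "2 * L' \<le> (3/2 - \<zeta>/20000) * (2 * R)"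
    unfolding e1 e2 by (rule fin)
  then have "L' \<le> (3/2 - \<zeta>/20000) * R" by simp
  then show ?thesis using LHS LL' by (simp add: R_def)
qed

end
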